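(* Every Move-To-Front-Every-Other-Access algorithm (for any choice of initial bits) has competitive ratio at least $2.5$ (full cost model): for every such algorithm $A$, every $c<2.5$ and every constant $b$, there exist a list and a request sequence $\sigma$ with $A(\sigma)>c\cdot\mathrm{OPT}(\sigma)+b$.
   Context: Static list update: a list of distinct items in some initial order; serving a request to the item at position $i$ (from the front) costs $i$ (full cost model); the accessed item may be moved closer to the front for free (free exchange); two adjacent items may be swapped at cost $1$ (paid exchange). $A(\sigma)$ is the total cost of algorithm $A$ and $\mathrm{OPT}(\sigma)$ the minimum cost of any offline algorithm from the same initial list. A Move-To-Front-Every-Other-Access (MTF2) algorithm maintains one bit per item, with arbitrary initial values; on each request to an item $z$ it flips the bit of $z$, and if the bit becomes $0$ it moves $z$ to the front (free exchange), otherwise it leaves the list unchanged; it makes no paid exchanges. (MTFO is the case with all initial bits $1$, MTFE with all initial bits $0$.) *)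

theory Defs
  imports Complex_Main
begin

(* 0-based position of x in xs (length xs if absent); access cost is pos + 1 *)
fun pos :: "'a \<Rightarrow> 'a list \<Rightarrow> nat" where
  "pos x [] = 0"
| "pos x (y # ys) = (if x = y then 0 else Suc (pos x ys))"

definition swap_adj :: "nat \<Rightarrow> 'a list \<Rightarrow> 'a list" where
  "swap_adj i xs = (if Suc i < length xs then xs[i := xs ! Suc i, Suc i := xs ! i] else xs)"

definition move_to :: "nat \<Rightarrow> 'a \<Rightarrow> 'a list \<Rightarrow> 'a list" where
  "move_to j x xs = take j (remove1 x xs) @ x # drop j (remove1 x xs)"

(* cost of an offline algorithm: for each request, a list of paid adjacent swaps
   (each cost 1) done before serving, the access (cost position, 1-based), then
   the accessed item is moved forward (free) to position min j (its position) *)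
fun off_cost :: "'a list \<Rightarrow> 'a list \<Rightarrow> (nat list \<times> nat) list \<Rightarrow> nat" where
  "off_cost s [] _ = 0"
| "off_cost s (x # \<sigma>) [] = 0"
| "off_cost s (x # \<sigma>) ((sw, j) # as) =
     (let s' = fold swap_adj sw s; i = pos x s'
      in length sw + (i + 1) + off_cost (move_to (min j i) x s') \<sigma> as)"

definition OPT :: "'a list \<Rightarrow> 'a list \<Rightarrow> nat" where
  "OPT s \<sigma> = (LEAST c. \<exists>as. length as = length \<sigma> \<and> off_cost s \<sigma> as = c)"

(* MTF2 with current bit assignment B (True = 1, False = 0): on request z flip the
   bit of z; if it becomes 0, move z to the front; no paid exchanges *)
fun mtf2_cost :: "('a \<Rightarrow> bool) \<Rightarrow> 'a list \<Rightarrow> 'a list \<Rightarrow> nat" where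
  "mtf2_cost B s [] = 0"
| "mtf2_cost B s (z # \<sigma>) =
     (let B' = B(z := \<not> B z)
      in pos z s + 1 + mtf2_cost B' (if B' z then s else z # remove1 z s) \<sigma>)"

end

theory Submission
  imports Defs
begin


definition trip :: "'a list \<Rightarrow> 'a list" where
  "trip ys = concat (map (\<lambda>y. [y,y,y]) ys)"

lemma trip_simps[simp]: "trip [] = []" "trip (y # ys) = y # y # y # trip ys"
  by (simp_all add: trip_def)

lemma length_trip[simp]: "length (trip ys) = 3 * length ys"
  by (induction ys) auto

lemma set_trip[simp]: "set (trip ys) = set ys"
  by (induction ys) auto

definition per :: "'a list \<Rightarrow> 'a list" where
  "per xs = xs @ trip xs @ rev xs @ trip (rev xs)"

fun mst :: "('a \<Rightarrow> bool) \<Rightarrow> 'a list \<Rightarrow> 'a list \<Rightarrow> ('a \<Rightarrow> bool) \<times> 'a list" where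
  "mst B s [] = (B, s)"
| "mst B s (z # \<sigma>) = (let B' = B(z := \<not> B z) in mst B' (if B' z then s else z # remove1 z s) \<sigma>)"

lemma mtf2_append:
  "mtf2_cost B s (p @ q) = mtf2_cost B s p + mtf2_cost (fst (mst B s p)) (snd (mst B s p)) q"
  by (induction p arbitrary: B s) (auto simp: Let_def)

lemma mst_append:
  "mst B s (p @ q) = mst (fst (mst B s p)) (snd (mst B s p)) q"
  by (induction p arbitrary: B s) (auto simp: Let_def)

lemma pos_split: "x \<notin> set as \<Longrightarrow> pos x (as @ x # bs) = length as"
  by (induction as) auto

lemma m_F1:
  "distinct (ps @ ys) \<Longrightarrow> \<forall>y\<in>set ys. B y \<Longrightarrow>
   2 * mtf2_cost B (ps @ ys) ys = length ys * (2 * length ps + length ys + 1) \<and>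
   snd (mst B (ps @ ys) ys) = rev ys @ ps \<and>
   (\<forall>x. fst (mst B (ps @ ys) ys) x = (if x \<in> set ys then False else B x))"
proof (induction ys arbitrary: ps B)
  case Nil
  then show ?case by simp
next
  case (Cons y ys)
  define B' where "B' = B(y := False)"
  have By: "B y" using Cons.prems by simp
  have yn: "y \<notin> set ps" "y \<notin> set ys" using Cons.prems(1) by auto
  have d: "distinct ((y # ps) @ ys)" using Cons.prems(1) by auto
  have b': "\<forall>z\<in>set ys. B' z" using Cons.prems(2) yn by (auto simp: B'_def)
  note IH = Cons.IH[OF d b']
  have p: "pos y (ps @ y # ys) = length ps" using yn by (simp add: pos_split)
  have r: "remove1 y (ps @ y # ys) = ps @ ys" using yn by (simp add: remove1_append)
  have e1: "mtf2_cost B (ps @ y # ys) (y # ys) = length ps + 1 + mtf2_cost B' ((y # ps) @ ys) ys"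
    using By p r by (simp add: B'_def Let_def)
  have e2: "mst B (ps @ y # ys) (y # ys) = mst B' ((y # ps) @ ys) ys"
    using By r by (simp add: B'_def Let_def)
  show ?case
  proof (intro conjI)
    show "2 * mtf2_cost B (ps @ y # ys) (y # ys) = length (y # ys) * (2 * length ps + length (y # ys) + 1)"
      using e1 IH by (simp add: algebra_simps)
    show "snd (mst B (ps @ y # ys) (y # ys)) = rev (y # ys) @ ps"
      using e2 IH by simp
    show "\<forall>x. fst (mst B (ps @ y # ys) (y # ys)) x = (if x \<in> set (y # ys) then False else B x)"
    proof
      fix x
      have "fst (mst B (ps @ y # ys) (y # ys)) x = (if x \<in> set ys then False else B' x)"
        using e2 IH by simp
      then show "fst (mst B (ps @ y # ys) (y # ys)) x = (if x \<in> set (y # ys) then False else B x)"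
        by (auto simp: B'_def)
    qed
  qed
qed

lemma m_F3:
  "distinct (ps @ ys) \<Longrightarrow> \<forall>y\<in>set ys. \<not> B y \<Longrightarrow>
   mtf2_cost B (ps @ rev ys) (trip ys) = length ys * (2 * (length ps + length ys) + 1) \<and>
   snd (mst B (ps @ rev ys) (trip ys)) = rev ys @ ps \<and>
   (\<forall>x. fst (mst B (ps @ rev ys) (trip ys)) x = (if x \<in> set ys then True else B x))"
proof (induction ys arbitrary: ps B)
  case Nil
  then show ?case by simp
next
  case (Cons y ys)
  define B' where "B' = B(y := True)"
  have By: "\<not> B y" using Cons.prems by simp
  have yn: "y \<notin> set ps" "y \<notin> set ys" using Cons.prems(1) by auto
  have d: "distinct ((y # ps) @ ys)" using Cons.prems(1) by auto
  have b': "\<forall>z\<in>set ys. \<not> B' z" using Cons.prems(2) yn by (auto simp: B'_def)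
  note IH = Cons.IH[OF d b']
  have yn2: "y \<notin> set (ps @ rev ys)" using yn by simp
  have p: "pos y ((ps @ rev ys) @ [y]) = length ps + length ys"
    using pos_split[OF yn2, of "[]"] by simp
  have r: "remove1 y ((ps @ rev ys) @ [y]) = ps @ rev ys" using yn2 by (simp add: remove1_append)
  have e1: "mtf2_cost B (ps @ rev (y # ys)) (trip (y # ys))
      = 2 * (length ps + length ys + 1) + 1 + mtf2_cost B' ((y # ps) @ rev ys) (trip ys)"
    using By p r by (simp add: B'_def Let_def)
  have e2: "mst B (ps @ rev (y # ys)) (trip (y # ys)) = mst B' ((y # ps) @ rev ys) (trip ys)"
    using By r by (simp add: B'_def Let_def)
  show ?case
  proof (intro conjI)
    show "mtf2_cost B (ps @ rev (y # ys)) (trip (y # ys)) = length (y # ys) * (2 * (length ps + length (y # ys)) + 1)"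
      using e1 IH by (simp add: algebra_simps)
    show "snd (mst B (ps @ rev (y # ys)) (trip (y # ys))) = rev (y # ys) @ ps"
      using e2 IH by simp
    show "\<forall>x. fst (mst B (ps @ rev (y # ys)) (trip (y # ys))) x = (if x \<in> set (y # ys) then True else B x)"
    proof
      fix x
      have "fst (mst B (ps @ rev (y # ys)) (trip (y # ys))) x = (if x \<in> set ys then True else B' x)"
        using e2 IH by simp
      then show "fst (mst B (ps @ rev (y # ys)) (trip (y # ys))) x = (if x \<in> set (y # ys) then True else B x)"
        by (auto simp: B'_def)
    qed
  qed
qed

lemma m_pre:
  "distinct zs \<Longrightarrow> \<forall>z\<in>set zs. \<not> B z \<Longrightarrow>
   snd (mst B s zs) = s \<and> (\<forall>x. fst (mst B s zs) x = (B x \<or> x \<in> set zs))"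
proof (induction zs arbitrary: B)
  case Nil then show ?case by simp
next
  case (Cons z zs)
  have e: "mst B s (z # zs) = mst (B(z := True)) s zs" using Cons.prems by (simp add: Let_def)
  have "\<forall>y\<in>set zs. \<not> (B(z := True)) y" using Cons.prems by auto
  then have IH: "snd (mst (B(z := True)) s zs) = s \<and> (\<forall>x. fst (mst (B(z := True)) s zs) x = ((B(z := True)) x \<or> x \<in> set zs))"
    using Cons.IH Cons.prems by auto
  show ?case using e IH by auto
qed

lemma m_per:
  assumes d: "distinct xs" and bt: "\<forall>x\<in>set xs. B x"
  shows "mtf2_cost B xs (per xs) = 5 * length xs ^ 2 + 3 * length xs \<and>
         snd (mst B xs (per xs)) = xs \<and> (\<forall>x\<in>set xs. fst (mst B xs (per xs)) x)"
proof -
  let ?n = "length xs"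
  have A: "2 * mtf2_cost B xs xs = ?n * (?n + 1) \<and> snd (mst B xs xs) = rev xs \<and>
       (\<forall>x. fst (mst B xs xs) x = (if x \<in> set xs then False else B x))"
    using m_F1[of "[]" xs B] d bt by simp
  define B1 where "B1 = fst (mst B xs xs)"
  have b1: "\<forall>y\<in>set (xs). \<not> B1 y" using A by (simp add: B1_def)
  have C: "mtf2_cost B1 (rev xs) (trip xs) = ?n * (2 * ?n + 1) \<and> snd (mst B1 (rev xs) (trip xs)) = rev xs \<and>
       (\<forall>x. fst (mst B1 (rev xs) (trip xs)) x = (if x \<in> set xs then True else B1 x))"
    using m_F3[of "[]" xs B1] d b1 by simp
  define B2 where "B2 = fst (mst B1 (rev xs) (trip xs))"
  have b2: "\<forall>y\<in>set (rev xs). B2 y" using C by (simp add: B2_def)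
  have D: "2 * mtf2_cost B2 (rev xs) (rev xs) = ?n * (?n + 1) \<and> snd (mst B2 (rev xs) (rev xs)) = xs \<and>
       (\<forall>x. fst (mst B2 (rev xs) (rev xs)) x = (if x \<in> set xs then False else B2 x))"
    using m_F1[of "[]" "rev xs" B2] d b2 by simp
  define B3 where "B3 = fst (mst B2 (rev xs) (rev xs))"
  have b3: "\<forall>y\<in>set (rev xs). \<not> B3 y" using D by (simp add: B3_def)
  have E: "mtf2_cost B3 xs (trip (rev xs)) = ?n * (2 * ?n + 1) \<and> snd (mst B3 xs (trip (rev xs))) = xs \<and>
       (\<forall>x. fst (mst B3 xs (trip (rev xs))) x = (if x \<in> set xs then True else B3 x))"
    using m_F3[of "[]" "rev xs" B3] d b3 by simp
  have cost: "mtf2_cost B xs (per xs) = mtf2_cost B xs xs + (mtf2_cost B1 (rev xs) (trip xs) +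
      (mtf2_cost B2 (rev xs) (rev xs) + mtf2_cost B3 xs (trip (rev xs))))"
    unfolding per_def mtf2_append mst_append using A C D
    by (simp only: B1_def B2_def B3_def)
  have st: "mst B xs (per xs) = mst B3 xs (trip (rev xs))"
    unfolding per_def mst_append using A C D
    by (simp only: B1_def B2_def B3_def)
  have "2 * mtf2_cost B xs (per xs) = 2 * (5 * ?n ^ 2 + 3 * ?n)"
    using cost A C D E by (simp add: algebra_simps power2_eq_square)
  then show ?thesis using st E by simp
qed

lemma m_rep:
  assumes "distinct xs" "\<forall>x\<in>set xs. B x"
  shows "mtf2_cost B xs (concat (replicate K (per xs))) = K * (5 * length xs ^ 2 + 3 * length xs)"
  using assms(2)
proof (induction K arbitrary: B)
  case 0 then show ?case by simp
next
  case (Suc K)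
  note P = m_per[OF assms(1) Suc.prems]
  have "\<forall>x\<in>set xs. fst (mst B xs (per xs)) x" using P by simp
  then have R: "mtf2_cost (fst (mst B xs (per xs))) xs (concat (replicate K (per xs))) = K * (5 * length xs ^ 2 + 3 * length xs)"
    by (rule Suc.IH)
  have "mtf2_cost B xs (concat (replicate (Suc K) (per xs))) = mtf2_cost B xs (per xs @ concat (replicate K (per xs)))"
    by simp
  also have "\<dots> = mtf2_cost B xs (per xs) + mtf2_cost (fst (mst B xs (per xs))) (snd (mst B xs (per xs))) (concat (replicate K (per xs)))"
    by (rule mtf2_append)
  also have "\<dots> = Suc K * (5 * length xs ^ 2 + 3 * length xs)"
    using P R by simp
  finally show ?case .
qed


lemma mtf2_main:
  assumes "distinct xs"
  shows "mtf2_cost B xs (filter (\<lambda>x. \<not> B x) xs @ concat (replicate K (per xs))) \<ge> K * (5 * length xs ^ 2 + 3 * length xs)"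
proof -
  let ?p = "filter (\<lambda>x. \<not> B x) xs"
  have d: "distinct ?p" using assms by simp
  have n: "\<forall>z\<in>set ?p. \<not> B z" by simp
  have P: "snd (mst B xs ?p) = xs \<and> (\<forall>x. fst (mst B xs ?p) x = (B x \<or> x \<in> set ?p))"
    by (rule m_pre[OF d n])
  have T: "\<forall>x\<in>set xs. fst (mst B xs ?p) x" using P by auto
  have R: "mtf2_cost (fst (mst B xs ?p)) xs (concat (replicate K (per xs))) = K * (5 * length xs ^ 2 + 3 * length xs)"
    by (rule m_rep[OF assms T])
  have "mtf2_cost B xs (?p @ concat (replicate K (per xs))) = mtf2_cost B xs ?p + mtf2_cost (fst (mst B xs ?p)) (snd (mst B xs ?p)) (concat (replicate K (per xs)))"
    by (rule mtf2_append)
  moreover have S: "snd (mst B xs ?p) = xs" using P by (rule conjunct1)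
  ultimately have "mtf2_cost B xs (?p @ concat (replicate K (per xs))) = mtf2_cost B xs ?p + K * (5 * length xs ^ 2 + 3 * length xs)"
    by (simp only: S R)
  then show ?thesis by linarith
qed


fun off_st :: "'a list \<Rightarrow> 'a list \<Rightarrow> (nat list \<times> nat) list \<Rightarrow> 'a list" where
  "off_st s [] _ = s"
| "off_st s (x # \<sigma>) [] = s"
| "off_st s (x # \<sigma>) ((sw, j) # as) =
     (let s' = fold swap_adj sw s; i = pos x s' in off_st (move_to (min j i) x s') \<sigma> as)"

lemma off_append:
  "length a1 = length \<sigma>1 \<Longrightarrow>
   off_cost s (\<sigma>1 @ \<sigma>2) (a1 @ a2) = off_cost s \<sigma>1 a1 + off_cost (off_st s \<sigma>1 a1) \<sigma>2 a2"
proof (induction \<sigma>1 arbitrary: s a1)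
  case Nil then show ?case by simp
next
  case (Cons x \<sigma>1)
  then obtain sw j a1' where "a1 = (sw, j) # a1'" by (cases a1) auto
  then show ?case using Cons by (auto simp: Let_def)
qed

lemma off_st_append:
  "length a1 = length \<sigma>1 \<Longrightarrow>
   off_st s (\<sigma>1 @ \<sigma>2) (a1 @ a2) = off_st (off_st s \<sigma>1 a1) \<sigma>2 a2"
proof (induction \<sigma>1 arbitrary: s a1)
  case Nil then show ?case by simp
next
  case (Cons x \<sigma>1)
  then obtain sw j a1' where "a1 = (sw, j) # a1'" by (cases a1) auto
  then show ?case using Cons by (auto simp: Let_def)
qed

lemma mv_same: "x \<notin> set as \<Longrightarrow> move_to (length as) x (as @ x # bs) = as @ x # bs"
  by (simp add: move_to_def remove1_append)

lemma mv_front: "move_to 0 x (x # bs) = x # bs"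
  by (simp add: move_to_def)

lemma o_keep:
  "distinct L \<Longrightarrow> set \<sigma> \<subseteq> set L \<Longrightarrow> length L \<le> N \<Longrightarrow>
   off_st L \<sigma> (replicate (length \<sigma>) ([], N)) = L \<and>
   off_cost L \<sigma> (replicate (length \<sigma>) ([], N)) \<le> length \<sigma> * length L"
proof (induction \<sigma>)
  case Nil then show ?case by simp
next
  case (Cons x \<sigma>)
  have "x \<in> set L" using Cons.prems by simp
  then obtain as bs where L: "L = as @ x # bs" by (meson split_list)
  have xa: "x \<notin> set as" using Cons.prems(1) L by simp
  have p: "pos x L = length as" using L xa by (simp add: pos_split)
  have le: "length as \<le> N" using Cons.prems(3) L by simp
  have m: "move_to (min N (length as)) x L = L" using mv_same[OF xa, of bs] L le by (simp add: min_def)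
  have IH: "off_st L \<sigma> (replicate (length \<sigma>) ([], N)) = L \<and>
   off_cost L \<sigma> (replicate (length \<sigma>) ([], N)) \<le> length \<sigma> * length L"
    using Cons by simp
  have l: "length as + 1 \<le> length L" using L by simp
  show ?case using IH p m l by (simp add: Let_def)
qed

lemma o_F1:
  "distinct (ps @ ys @ qs) \<Longrightarrow> length (ps @ ys @ qs) \<le> N \<Longrightarrow>
   2 * off_cost (ps @ ys @ qs) ys (replicate (length ys) ([], N)) = length ys * (2 * length ps + length ys + 1) \<and>
   off_st (ps @ ys @ qs) ys (replicate (length ys) ([], N)) = ps @ ys @ qs"
proof (induction ys arbitrary: ps)
  case Nil then show ?case by simp
next
  case (Cons y ys)
  have yn: "y \<notin> set ps" using Cons.prems(1) by simp
  have p: "pos y (ps @ y # ys @ qs) = length ps" using yn by (simp add: pos_split)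
  have le: "length ps \<le> N" using Cons.prems(2) by simp
  have m: "move_to (min N (length ps)) y (ps @ y # ys @ qs) = ps @ y # ys @ qs"
    using mv_same[OF yn, of "ys @ qs"] le by (simp add: min_def)
  have IH: "2 * off_cost ((ps @ [y]) @ ys @ qs) ys (replicate (length ys) ([], N)) = length ys * (2 * length (ps @ [y]) + length ys + 1) \<and>
   off_st ((ps @ [y]) @ ys @ qs) ys (replicate (length ys) ([], N)) = (ps @ [y]) @ ys @ qs"
    using Cons.prems by (intro Cons.IH) auto
  show ?case using IH p m by (simp add: Let_def algebra_simps)
qed

definition tacts :: "nat \<Rightarrow> 'a list \<Rightarrow> (nat list \<times> nat) list" where
  "tacts N ys = concat (map (\<lambda>_. [([], 0), ([], N), ([], N)]) ys)"

lemma tacts_simps[simp]: "tacts N [] = []" "tacts N (y # ys) = ([], 0) # ([], N) # ([], N) # tacts N ys"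
  by (simp_all add: tacts_def)

lemma length_tacts[simp]: "length (tacts N ys) = 3 * length ys"
  by (induction ys) auto

lemma o_F3:
  "distinct (ps @ ys) \<Longrightarrow>
   2 * off_cost (ps @ ys) (trip ys) (tacts N ys) = length ys * (2 * length ps + length ys + 5) \<and>
   off_st (ps @ ys) (trip ys) (tacts N ys) = rev ys @ ps"
proof (induction ys arbitrary: ps)
  case Nil then show ?case by simp
next
  case (Cons y ys)
  have yn: "y \<notin> set ps" "y \<notin> set ys" using Cons.prems(1) by auto
  have p: "pos y (ps @ y # ys) = length ps" using yn by (simp add: pos_split)
  have r: "remove1 y (ps @ y # ys) = ps @ ys" using yn by (simp add: remove1_append)
  have m: "move_to 0 y (ps @ y # ys) = (y # ps) @ ys" using r by (simp add: move_to_def)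
  have IH: "2 * off_cost ((y # ps) @ ys) (trip ys) (tacts N ys) = length ys * (2 * length (y # ps) + length ys + 5) \<and>
   off_st ((y # ps) @ ys) (trip ys) (tacts N ys) = rev ys @ (y # ps)"
    using Cons.prems by (intro Cons.IH) auto
  have p0: "pos y ((y # ps) @ ys) = 0" by simp
  have mf: "move_to 0 y ((y # ps) @ ys) = (y # ps) @ ys" by (simp add: move_to_def)
  have e1: "off_cost (ps @ y # ys) (trip (y # ys)) (tacts N (y # ys)) = length ps + 3 + off_cost ((y # ps) @ ys) (trip ys) (tacts N ys)"
    using p m p0 mf by (simp add: Let_def del: append.simps)
  have e2: "off_st (ps @ y # ys) (trip (y # ys)) (tacts N (y # ys)) = off_st ((y # ps) @ ys) (trip ys) (tacts N ys)"
    using p m p0 mf by (simp add: Let_def del: append.simps)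
  show ?case using IH e1 e2 by (simp add: algebra_simps)
qed



definition acts :: "nat \<Rightarrow> 'a list \<Rightarrow> (nat list \<times> nat) list" where
  "acts N xs = replicate (length xs) ([], N) @ tacts N xs @ replicate (length xs) ([], N) @ tacts N (rev xs)"

lemma len_rep: "length (concat (replicate K xs)) = K * length xs"
  by (induction K) auto

lemma length_per: "length (per xs) = 8 * length xs" by (simp add: per_def)
lemma length_acts: "length (acts N xs) = 8 * length xs" by (simp add: acts_def)

lemma o_per:
  assumes d: "distinct xs" and N: "length xs \<le> N"
  shows "off_cost xs (per xs) (acts N xs) = 2 * length xs ^ 2 + 6 * length xs \<and> off_st xs (per xs) (acts N xs) = xs"
proof -
  let ?n = "length xs"
  let ?r = "replicate ?n ([], N)"
  have A: "2 * off_cost xs xs ?r = ?n * (?n + 1) \<and> off_st xs xs ?r = xs"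
    using o_F1[of "[]" xs "[]" N] d N by simp
  have C: "2 * off_cost xs (trip xs) (tacts N xs) = ?n * (?n + 5) \<and> off_st xs (trip xs) (tacts N xs) = rev xs"
    using o_F3[of "[]" xs N] d by simp
  have D: "2 * off_cost (rev xs) (rev xs) ?r = ?n * (?n + 1) \<and> off_st (rev xs) (rev xs) ?r = rev xs"
    using o_F1[of "[]" "rev xs" "[]" N] d N by simp
  have E: "2 * off_cost (rev xs) (trip (rev xs)) (tacts N (rev xs)) = ?n * (?n + 5) \<and> off_st (rev xs) (trip (rev xs)) (tacts N (rev xs)) = xs"
    using o_F3[of "[]" "rev xs" N] d by simp
  have cost: "off_cost xs (per xs) (acts N xs) = off_cost xs xs ?r + (off_cost xs (trip xs) (tacts N xs) +
      (off_cost (rev xs) (rev xs) ?r + off_cost (rev xs) (trip (rev xs)) (tacts N (rev xs))))"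
    unfolding per_def acts_def using A C D
    by (simp add: off_append off_st_append)
  have st: "off_st xs (per xs) (acts N xs) = xs"
    unfolding per_def acts_def using A C D E
    by (simp add: off_st_append)
  have "2 * off_cost xs (per xs) (acts N xs) = 2 * (2 * ?n ^ 2 + 6 * ?n)"
    using cost A C D E by (simp add: algebra_simps power2_eq_square)
  then show ?thesis using st by simp
qed

lemma o_rep:
  assumes "distinct xs" "length xs \<le> N"
  shows "off_cost xs (concat (replicate K (per xs))) (concat (replicate K (acts N xs))) = K * (2 * length xs ^ 2 + 6 * length xs)"
proof (induction K)
  case 0 then show ?case by simp
next
  case (Suc K)
  note P = o_per[OF assms]
  have l: "length (acts N xs) = length (per xs)" by (simp add: length_per length_acts)
  have "off_cost xs (concat (replicate (Suc K) (per xs))) (concat (replicate (Suc K) (acts N xs)))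
     = off_cost xs (per xs @ concat (replicate K (per xs))) (acts N xs @ concat (replicate K (acts N xs)))"
    by simp
  also have "\<dots> = off_cost xs (per xs) (acts N xs) + off_cost (off_st xs (per xs) (acts N xs)) (concat (replicate K (per xs))) (concat (replicate K (acts N xs)))"
    by (rule off_append[OF l])
  also have "\<dots> = Suc K * (2 * length xs ^ 2 + 6 * length xs)"
    using P Suc.IH by simp
  finally show ?case .
qed

lemma opt_main:
  fixes B :: "'a \<Rightarrow> bool" and xs :: "'a list"
  assumes d: "distinct xs"
  defines "p \<equiv> filter (\<lambda>x. \<not> B x) xs"
  shows "OPT xs (p @ concat (replicate K (per xs))) \<le> length xs * length xs + K * (2 * length xs ^ 2 + 6 * length xs)"
proof -
  let ?n = "length xs"
  let ?a = "replicate (length p) ([], ?n) @ concat (replicate K (acts ?n xs))"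
  let ?s = "p @ concat (replicate K (per xs))"
  have sp: "set p \<subseteq> set xs" by (simp add: p_def)
  have lp: "length p \<le> ?n" by (simp add: p_def)
  have K1: "off_st xs p (replicate (length p) ([], ?n)) = xs \<and> off_cost xs p (replicate (length p) ([], ?n)) \<le> length p * ?n"
    using o_keep[OF d sp] by simp
  have la: "length ?a = length ?s" by (simp add: len_rep length_per length_acts)
  have "off_cost xs ?s ?a = off_cost xs p (replicate (length p) ([], ?n)) + off_cost (off_st xs p (replicate (length p) ([], ?n))) (concat (replicate K (per xs))) (concat (replicate K (acts ?n xs)))"
    by (rule off_append) simp
  also have "\<dots> = off_cost xs p (replicate (length p) ([], ?n)) + K * (2 * ?n ^ 2 + 6 * ?n)"
    using K1 o_rep[OF d le_refl, of K] by simp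
  finally have e: "off_cost xs ?s ?a = off_cost xs p (replicate (length p) ([], ?n)) + K * (2 * ?n ^ 2 + 6 * ?n)" .
  have "length p * ?n \<le> ?n * ?n" using lp by simp
  then have ub: "off_cost xs ?s ?a \<le> ?n * ?n + K * (2 * ?n ^ 2 + 6 * ?n)" using e K1 by linarith
  have "OPT xs ?s \<le> off_cost xs ?s ?a"
    unfolding OPT_def by (rule Least_le) (use la in blast)
  then show ?thesis using ub by linarith
qed



theorem lemma11:
  fixes B :: "nat \<Rightarrow> bool" and c b :: real
  assumes "c < 5 / 2"
  shows "\<exists>(s :: nat list) \<sigma>. distinct s \<and> set \<sigma> \<subseteq> set s \<and>
           real (mtf2_cost B s \<sigma>) > c * real (OPT s \<sigma>) + b"
proof -
  define cm where "cm = max c 0"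
  have cm0: "cm \<ge> 0" and ccm: "c \<le> cm" and cm5: "cm < 5/2" using assms by (auto simp: cm_def)
  define dd where "dd = 5 - 2 * cm"
  have dd0: "dd > 0" using cm5 by (simp add: dd_def)
  define n :: nat where "n = nat \<lceil>(\<bar>3 - 6 * cm\<bar> + 1) / dd\<rceil> + 1"
  have n1: "real n \<ge> 1" by (simp add: n_def)
  have "real n \<ge> (\<bar>3 - 6 * cm\<bar> + 1) / dd" unfolding n_def by linarith
  then have dn: "dd * real n \<ge> \<bar>3 - 6 * cm\<bar> + 1" using dd0 by (simp add: field_simps)
  have "dd * real n * real n \<ge> (\<bar>3 - 6 * cm\<bar> + 1) * real n"
    using mult_right_mono[OF dn, of "real n"] n1 by simp
  have id: "5 * real n ^ 2 + 3 * real n - cm * (2 * real n ^ 2 + 6 * real n) = dd * real n * real n + (3 - 6 * cm) * real n"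
    by (simp add: dd_def algebra_simps power2_eq_square)
  have ab: "(3 - 6 * cm) * real n \<ge> - \<bar>3 - 6 * cm\<bar> * real n"
    using n1 by (intro mult_right_mono) auto
  have D1: "5 * real n ^ 2 + 3 * real n - cm * (2 * real n ^ 2 + 6 * real n) \<ge> 1"
    unfolding id using ab n1 \<open>dd * real n * real n \<ge> (\<bar>3 - 6 * cm\<bar> + 1) * real n\<close>
    by (simp add: algebra_simps)
  define K :: nat where "K = nat \<lceil>cm * real n ^ 2 + \<bar>b\<bar>\<rceil> + 1"
  have K1: "real K > cm * real n ^ 2 + \<bar>b\<bar>" unfolding K_def by linarith
  define xs where "xs = [0..<n]"
  define \<sigma> where "\<sigma> = filter (\<lambda>x. \<not> B x) xs @ concat (replicate K (per xs))"
  have dxs: "distinct xs" and lxs: "length xs = n" by (simp_all add: xs_def)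
  have M: "mtf2_cost B xs \<sigma> \<ge> K * (5 * n ^ 2 + 3 * n)"
    using mtf2_main[OF dxs, where B=B and K=K] lxs by (simp add: \<sigma>_def)
  have O: "OPT xs \<sigma> \<le> n * n + K * (2 * n ^ 2 + 6 * n)"
    using opt_main[OF dxs, where B=B and K=K] lxs by (simp add: \<sigma>_def)
  have sset: "set \<sigma> \<subseteq> set xs" by (auto simp: \<sigma>_def per_def)
  have Mr: "real (mtf2_cost B xs \<sigma>) \<ge> real K * (5 * real n ^ 2 + 3 * real n)"
    using of_nat_mono[OF M, where 'a=real] by simp
  have Or: "real (OPT xs \<sigma>) \<le> real n * real n + real K * (2 * real n ^ 2 + 6 * real n)"
    using of_nat_mono[OF O, where 'a=real] by simp
  have "c * real (OPT xs \<sigma>) \<le> cm * real (OPT xs \<sigma>)" using ccm by (simp add: mult_right_mono)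
  also have "\<dots> \<le> cm * (real n * real n + real K * (2 * real n ^ 2 + 6 * real n))"
    using Or cm0 by (simp add: mult_left_mono)
  finally have co: "c * real (OPT xs \<sigma>) \<le> cm * (real n * real n) + cm * (real K * (2 * real n ^ 2 + 6 * real n))"
    by (simp add: algebra_simps)
  have "real K * (5 * real n ^ 2 + 3 * real n - cm * (2 * real n ^ 2 + 6 * real n)) \<ge> real K * 1"
    using D1 by (intro mult_left_mono) auto
  then have "real K * (5 * real n ^ 2 + 3 * real n) - cm * (real K * (2 * real n ^ 2 + 6 * real n)) \<ge> real K"
    by (simp add: algebra_simps)
  moreover have "cm * (real n * real n) \<le> cm * real n ^ 2" by (simp add: power2_eq_square)
  ultimately have "real (mtf2_cost B xs \<sigma>) > c * real (OPT xs \<sigma>) + b"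
    using Mr co K1 abs_ge_self[of b] by linarith
  then show ?thesis using dxs sset by blast
qed


end
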